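(* If a Banach space $Z$ admits a uniform embedding into $L_2$, then $Z$ (with its norm metric) is $\Lambda$-nontrivial.
   Context: A uniform embedding is an invertible map $f$ such that $f$ and $f^{-1}$ are uniformly continuous. A map $f:X\to L_2$ is $\tau$-thresholding if $d(x,y)\ge\tau$ implies $\|f(x)-f(y)\|_2\ge\tau$. Define $\Lambda_\tau(X,\varepsilon)=\inf\big\{\sup_{x,y\in X,\ d(x,y)\ge\varepsilon\tau}\frac{\varepsilon\|f(x)-f(y)\|_2}{d(x,y)}: f:X\to L_2\text{ is }\tau\text{-thresholding}\big\}$ and $\Lambda(X,\varepsilon)=\sup_{\tau>0}\Lambda_\tau(X,\varepsilon)$. $(X,d)$ is $\Lambda$-nontrivial if $\liminf_{\varepsilon\to0}\Lambda(X,\varepsilon)=0$. *)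

theory Defs
  imports "HOL-Analysis.Analysis"
begin

text \<open>The Hilbert space L_2 (= L_2[0,1]) is modelled, up to linear isometry, by the
  separable infinite-dimensional Hilbert space l_2 of square-summable real sequences.\<close>

definition l2_space :: "(nat \<Rightarrow> real) set" where
  "l2_space = {u. summable (\<lambda>n. (u n)\<^sup>2)}"

definition l2_dist :: "(nat \<Rightarrow> real) \<Rightarrow> (nat \<Rightarrow> real) \<Rightarrow> real" where
  "l2_dist u v = sqrt (\<Sum>n. (u n - v n)\<^sup>2)"

definition uniform_embedding_L2 :: "('a::metric_space \<Rightarrow> (nat \<Rightarrow> real)) \<Rightarrow> bool" where
  "uniform_embedding_L2 f \<longleftrightarrow>
     (\<forall>x. f x \<in> l2_space) \<and> inj f \<and>
     (\<forall>e>0. \<exists>d>0. \<forall>x y. dist x y < d \<longrightarrow> l2_dist (f x) (f y) < e) \<and>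
     (\<forall>e>0. \<exists>d>0. \<forall>x y. l2_dist (f x) (f y) < d \<longrightarrow> dist x y < e)"

definition thresholding :: "real \<Rightarrow> ('a::metric_space \<Rightarrow> (nat \<Rightarrow> real)) \<Rightarrow> bool" where
  "thresholding \<tau> f \<longleftrightarrow>
     (\<forall>x. f x \<in> l2_space) \<and> (\<forall>x y. dist x y \<ge> \<tau> \<longrightarrow> l2_dist (f x) (f y) \<ge> \<tau>)"

text \<open>Values in [0, \<infinity>]: sup over the empty set is 0, inf over the empty set is \<infinity>.\<close>

definition Lambda_tau :: "'a::metric_space itself \<Rightarrow> real \<Rightarrow> real \<Rightarrow> ennreal" where
  "Lambda_tau _ \<tau> \<epsilon> =
     (INF f \<in> {f :: 'a \<Rightarrow> nat \<Rightarrow> real. thresholding \<tau> f}.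
        (SUP p \<in> {p :: 'a \<times> 'a. dist (fst p) (snd p) \<ge> \<epsilon> * \<tau>}.
           ennreal (\<epsilon> * l2_dist (f (fst p)) (f (snd p)) / dist (fst p) (snd p))))"

definition Lambda :: "'a::metric_space itself \<Rightarrow> real \<Rightarrow> ennreal" where
  "Lambda X \<epsilon> = (SUP \<tau> \<in> {0<..}. Lambda_tau X \<tau> \<epsilon>)"

definition Lambda_nontrivial :: "'a::metric_space itself \<Rightarrow> bool" where
  "Lambda_nontrivial X \<longleftrightarrow> Liminf (at_right 0) (\<lambda>\<epsilon>. Lambda X \<epsilon>) = 0"

end

theory Submission
  imports Defs
begin

lemma l2_summable_diff:
  assumes "u \<in> l2_space" "v \<in> l2_space"
  shows "summable (\<lambda>n. (u n - v n)\<^sup>2)"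
proof (rule summable_comparison_test')
  show "summable (\<lambda>n. 2 * (u n)\<^sup>2 + 2 * (v n)\<^sup>2)"
    using assms unfolding l2_space_def by (intro summable_add summable_mult) auto
  fix n :: nat
  have "(u n - v n)\<^sup>2 \<le> 2 * (u n)\<^sup>2 + 2 * (v n)\<^sup>2"
  proof -
    have "(u n - v n)\<^sup>2 + (u n + v n)\<^sup>2 = 2 * (u n)\<^sup>2 + 2 * (v n)\<^sup>2"
      by (simp add: power2_eq_square algebra_simps)
    then show ?thesis using zero_le_power2[of "u n + v n"] by linarith
  qed
  then show "norm ((u n - v n)\<^sup>2) \<le> 2 * (u n)\<^sup>2 + 2 * (v n)\<^sup>2" by simp
qed

lemma l2_dist_nonneg:
  assumes "u \<in> l2_space" "v \<in> l2_space"
  shows "l2_dist u v \<ge> 0"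
  unfolding l2_dist_def
  by (rule real_sqrt_ge_zero, rule suminf_nonneg[OF l2_summable_diff[OF assms]]) simp

lemma l2_dist_self: "l2_dist u u = 0"
  unfolding l2_dist_def by simp

lemma l2_partial_le:
  assumes "u \<in> l2_space" "v \<in> l2_space"
  shows "L2_set (\<lambda>n. u n - v n) {..<N} \<le> l2_dist u v"
  unfolding L2_set_def l2_dist_def
  by (rule real_sqrt_le_mono, rule sum_le_suminf[OF l2_summable_diff[OF assms]]) auto

lemma l2_triangle:
  assumes "u \<in> l2_space" "v \<in> l2_space" "w \<in> l2_space"
  shows "l2_dist u w \<le> l2_dist u v + l2_dist v w"
proof -
  let ?a = "l2_dist u v" and ?b = "l2_dist v w"
  have ab: "0 \<le> ?a + ?b" using l2_dist_nonneg[OF assms(1,2)] l2_dist_nonneg[OF assms(2,3)] by simp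
  have "(\<Sum>n. (u n - w n)\<^sup>2) \<le> (?a + ?b)\<^sup>2"
  proof (rule suminf_le_const[OF l2_summable_diff[OF assms(1,3)]])
    fix N
    have "L2_set (\<lambda>n. u n - w n) {..<N} = L2_set (\<lambda>n. (u n - v n) + (v n - w n)) {..<N}"
      by simp
    also have "\<dots> \<le> L2_set (\<lambda>n. u n - v n) {..<N} + L2_set (\<lambda>n. v n - w n) {..<N}"
      by (rule L2_set_triangle_ineq)
    also have "\<dots> \<le> ?a + ?b"
      using l2_partial_le[OF assms(1,2)] l2_partial_le[OF assms(2,3)] by (intro add_mono)
    finally have h: "L2_set (\<lambda>n. u n - w n) {..<N} \<le> ?a + ?b" .
    have "(\<Sum>n<N. (u n - w n)\<^sup>2) = (L2_set (\<lambda>n. u n - w n) {..<N})\<^sup>2"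
      unfolding L2_set_def by (simp add: sum_nonneg)
    also have "\<dots> \<le> (?a + ?b)\<^sup>2"
      using h by (intro power_mono) (auto simp: L2_set_def sum_nonneg)
    finally show "(\<Sum>n<N. (u n - w n)\<^sup>2) \<le> (?a + ?b)\<^sup>2" .
  qed
  then have "sqrt (\<Sum>n. (u n - w n)\<^sup>2) \<le> sqrt ((?a + ?b)\<^sup>2)" by (rule real_sqrt_le_mono)
  then show ?thesis using ab unfolding l2_dist_def[of u w] by simp
qed

lemma l2_chain:
  assumes "\<And>k. q k \<in> l2_space"
  shows "l2_dist (q 0) (q n) \<le> (\<Sum>k<n. l2_dist (q k) (q (Suc k)))"
proof (induction n)
  case 0 then show ?case by (simp add: l2_dist_self)
next
  case (Suc n)
  have "l2_dist (q 0) (q (Suc n)) \<le> l2_dist (q 0) (q n) + l2_dist (q n) (q (Suc n))"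
    by (rule l2_triangle[OF assms assms assms])
  then show ?case using Suc by simp
qed

lemma l2_scale_space: "u \<in> l2_space \<Longrightarrow> (\<lambda>n. c * u n) \<in> l2_space"
  unfolding l2_space_def by (simp add: power_mult_distrib summable_mult)

lemma l2_scale_dist: "u \<in> l2_space \<Longrightarrow> v \<in> l2_space \<Longrightarrow>
   l2_dist (\<lambda>n. c * u n) (\<lambda>n. c * v n) = \<bar>c\<bar> * l2_dist u v"
proof -
  assume a: "u \<in> l2_space" "v \<in> l2_space"
  have "(\<Sum>n. (c * u n - c * v n)\<^sup>2) = c\<^sup>2 * (\<Sum>n. (u n - v n)\<^sup>2)"
    using suminf_mult[OF l2_summable_diff[OF a], of "c\<^sup>2"]
    by (simp add: power_mult_distrib right_diff_distrib[symmetric])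
  then show ?thesis unfolding l2_dist_def by (simp add: real_sqrt_mult)
qed

lemma uc_chain:
  fixes f :: "'a::real_normed_vector \<Rightarrow> (nat \<Rightarrow> real)"
  assumes fl2: "\<And>x. f x \<in> l2_space" and eta: "\<eta> > 0"
    and uc: "\<And>x y. dist x y < \<eta> \<Longrightarrow> l2_dist (f x) (f y) < \<theta>"
  shows "l2_dist (f x) (f y) \<le> \<theta> * (dist x y / \<eta> + 1)"
proof -
  define d where "d = dist x y"
  define n where "n = nat \<lfloor>d / \<eta>\<rfloor> + 1"
  have d0: "d \<ge> 0" unfolding d_def by simp
  have npos: "n \<ge> 1" unfolding n_def by simp
  have r0: "d / \<eta> \<ge> 0" using d0 eta by simp
  have fl: "real (nat \<lfloor>d / \<eta>\<rfloor>) = of_int \<lfloor>d / \<eta>\<rfloor>" using r0 by simp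
  have "real n = of_int \<lfloor>d / \<eta>\<rfloor> + 1" unfolding n_def using fl by simp
  then have nbig: "d / \<eta> < real n" and nsmall: "real n \<le> d / \<eta> + 1"
    using floor_correct[of "d / \<eta>"] by linarith+
  define p where "p k = x + (real k / real n) *\<^sub>R (y - x)" for k
  define q where "q k = f (p k)" for k
  have step: "l2_dist (q k) (q (Suc k)) < \<theta>" for k
  proof -
    have "p (Suc k) - p k = (1 / real n) *\<^sub>R (y - x)"
      unfolding p_def using npos by (simp add: scaleR_left_diff_distrib[symmetric] add_divide_distrib)
    then have "dist (p k) (p (Suc k)) = norm ((1 / real n) *\<^sub>R (y - x))"
      by (metis dist_commute dist_norm)
    also have "\<dots> = d / real n"
      unfolding d_def by (simp add: dist_norm norm_minus_commute)
    also have "\<dots> < \<eta>" using nbig eta npos by (simp add: divide_less_eq mult.commute pos_divide_less_eq)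
    finally show ?thesis unfolding q_def by (rule uc)
  qed
  have "l2_dist (q 0) (q n) \<le> (\<Sum>k<n. l2_dist (q k) (q (Suc k)))"
    by (rule l2_chain) (simp add: q_def fl2)
  also have "\<dots> \<le> (\<Sum>k<n. \<theta>)" using step by (intro sum_mono) (simp add: less_imp_le)
  also have "\<dots> = real n * \<theta>" by simp
  also have "\<dots> \<le> (d / \<eta> + 1) * \<theta>"
  proof -
    have "\<theta> > 0" using step[of 0] l2_dist_nonneg[OF fl2 fl2, of "p 0" "p 1"] unfolding q_def by simp
    then show ?thesis using nsmall by (intro mult_right_mono) auto
  qed
  finally show ?thesis using npos unfolding q_def p_def d_def by (simp add: mult.commute)
qed

lemma Lambda_small:
  fixes f :: "'a::banach \<Rightarrow> (nat \<Rightarrow> real)"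
  assumes fl2: "\<And>x. f x \<in> l2_space" and eta: "\<eta> > 0" and rho: "\<rho> > 0" and del: "\<delta> > 0"
    and uc: "\<And>x y. dist x y < \<eta> \<Longrightarrow> l2_dist (f x) (f y) < \<rho> * \<delta> / 2"
    and ui: "\<And>x y. l2_dist (f x) (f y) < \<rho> \<Longrightarrow> dist x y < 1"
    and eps: "0 < \<epsilon>" "\<epsilon> < \<eta>"
  shows "Lambda TYPE('a) \<epsilon> \<le> ennreal \<delta>"
  unfolding Lambda_def
proof (rule SUP_least)
  fix \<tau> :: real assume "\<tau> \<in> {0<..}"
  then have tau: "\<tau> > 0" by simp
  define g where "g z = (\<lambda>n. (\<tau> / \<rho>) * f ((1 / \<tau>) *\<^sub>R z) n)" for z :: 'a
  have gl2: "g z \<in> l2_space" for z unfolding g_def by (rule l2_scale_space[OF fl2])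
  have gd: "l2_dist (g a) (g b) = (\<tau> / \<rho>) * l2_dist (f ((1 / \<tau>) *\<^sub>R a)) (f ((1 / \<tau>) *\<^sub>R b))" for a b
    unfolding g_def using l2_scale_dist[OF fl2 fl2, of "\<tau> / \<rho>"] tau rho by simp
  have dsc: "dist ((1 / \<tau>) *\<^sub>R a) ((1 / \<tau>) *\<^sub>R b) = dist a b / \<tau>" for a b :: 'a
  proof -
    have "dist ((1 / \<tau>) *\<^sub>R a) ((1 / \<tau>) *\<^sub>R b) = norm ((1 / \<tau>) *\<^sub>R (a - b))"
      by (simp add: dist_norm scaleR_diff_right)
    then show ?thesis using tau by (simp add: dist_norm)
  qed
  have thr: "thresholding \<tau> g"
    unfolding thresholding_def
  proof (intro conjI allI impI)
    fix x show "g x \<in> l2_space" by (rule gl2)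
  next
    fix a b :: 'a assume "\<tau> \<le> dist a b"
    then have "1 \<le> dist ((1 / \<tau>) *\<^sub>R a) ((1 / \<tau>) *\<^sub>R b)" using dsc tau by simp
    then have "\<rho> \<le> l2_dist (f ((1 / \<tau>) *\<^sub>R a)) (f ((1 / \<tau>) *\<^sub>R b))"
      using ui by (meson not_le)
    then have "(\<tau> / \<rho>) * \<rho> \<le> l2_dist (g a) (g b)" unfolding gd using tau rho
      by (intro mult_left_mono) auto
    then show "\<tau> \<le> l2_dist (g a) (g b)" using rho by simp
  qed
  have "Lambda_tau TYPE('a) \<tau> \<epsilon> \<le>
     (SUP p \<in> {p :: 'a \<times> 'a. dist (fst p) (snd p) \<ge> \<epsilon> * \<tau>}.
           ennreal (\<epsilon> * l2_dist (g (fst p)) (g (snd p)) / dist (fst p) (snd p)))"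
    unfolding Lambda_tau_def by (rule INF_lower) (use thr in simp)
  also have "\<dots> \<le> ennreal \<delta>"
  proof (rule SUP_least)
    fix p :: "'a \<times> 'a" assume "p \<in> {p. dist (fst p) (snd p) \<ge> \<epsilon> * \<tau>}"
    then have dp: "dist (fst p) (snd p) \<ge> \<epsilon> * \<tau>" by simp
    define a where "a = fst p"
    define b where "b = snd p"
    define d where "d = dist a b"
    have dge: "d \<ge> \<epsilon> * \<tau>" using dp unfolding d_def a_def b_def .
    have et: "\<epsilon> * \<tau> > 0" using eps tau by simp
    have dpos: "d > 0" using dge et by linarith
    have "l2_dist (f ((1 / \<tau>) *\<^sub>R a)) (f ((1 / \<tau>) *\<^sub>R b)) \<le> (\<rho> * \<delta> / 2) * (d / \<tau> / \<eta> + 1)"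
      using uc_chain[OF fl2 eta uc, where x="(1 / \<tau>) *\<^sub>R a" and y="(1 / \<tau>) *\<^sub>R b"]
      by (simp only: dsc d_def)
    then have "l2_dist (g a) (g b) \<le> (\<tau> / \<rho>) * ((\<rho> * \<delta> / 2) * (d / \<tau> / \<eta> + 1))"
      unfolding gd using tau rho by (intro mult_left_mono) auto
    also have "\<dots> = (\<delta> / 2) * (d / \<eta> + \<tau>)"
      using tau rho by (simp add: field_simps)
    finally have h1: "l2_dist (g a) (g b) \<le> (\<delta> / 2) * (d / \<eta> + \<tau>)" .
    have "\<epsilon> * l2_dist (g a) (g b) / d \<le> \<epsilon> * ((\<delta> / 2) * (d / \<eta> + \<tau>)) / d"
      using h1 eps dpos by (intro divide_right_mono mult_left_mono) auto
    also have "\<dots> = (\<delta> / 2) * (\<epsilon> / \<eta>) + (\<delta> / 2) * (\<epsilon> * \<tau> / d)"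
      using dpos eta by (simp add: field_simps)
    also have "\<dots> \<le> (\<delta> / 2) * 1 + (\<delta> / 2) * 1"
    proof (intro add_mono mult_left_mono)
      show "\<epsilon> / \<eta> \<le> 1" using eps eta by simp
      show "\<epsilon> * \<tau> / d \<le> 1" using dge dpos by simp
    qed (use del in auto)
    finally have "\<epsilon> * l2_dist (g a) (g b) / d \<le> \<delta>" by simp
    then show "ennreal (\<epsilon> * l2_dist (g (fst p)) (g (snd p)) / dist (fst p) (snd p)) \<le> ennreal \<delta>"
      unfolding a_def b_def d_def by (rule ennreal_leI)
  qed
  finally show "Lambda_tau TYPE('a) \<tau> \<epsilon> \<le> ennreal \<delta>" .
qed

theorem lemma5p7:
  fixes f :: "'a::banach \<Rightarrow> (nat \<Rightarrow> real)"
  assumes "uniform_embedding_L2 f"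
  shows "Lambda_nontrivial TYPE('a)"
proof -
  have fl2: "\<And>x. f x \<in> l2_space"
    and ucA: "\<forall>e>0. \<exists>d>0. \<forall>x y. dist x y < d \<longrightarrow> l2_dist (f x) (f y) < e"
    and uiA: "\<forall>e>0. \<exists>d>0. \<forall>x y. l2_dist (f x) (f y) < d \<longrightarrow> dist x y < e"
    using assms unfolding uniform_embedding_L2_def by auto
  obtain \<rho> where rho: "\<rho> > 0" and ui: "\<And>x y. l2_dist (f x) (f y) < \<rho> \<Longrightarrow> dist x y < 1"
    using uiA[rule_format, of 1] by auto
  have H: "Liminf (at_right 0) (\<lambda>\<epsilon>. Lambda TYPE('a) \<epsilon>) \<le> 0 + ennreal \<delta>" if del: "\<delta> > 0" for \<delta> :: real
  proof -
    have "\<rho> * \<delta> / 2 > 0" using rho del by simp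
    then obtain \<eta> where eta: "\<eta> > 0" and uc: "\<And>x y. dist x y < \<eta> \<Longrightarrow> l2_dist (f x) (f y) < \<rho> * \<delta> / 2"
      using ucA by meson
    have ev: "eventually (\<lambda>\<epsilon>. \<epsilon> \<in> {0<..<\<eta>}) (at_right (0::real))"
      using eta by (rule eventually_at_right_real)
    have "eventually (\<lambda>\<epsilon>. Lambda TYPE('a) \<epsilon> \<le> ennreal \<delta>) (at_right (0::real))"
      by (rule eventually_mono[OF ev]) (use Lambda_small[OF fl2 eta rho del uc ui] in auto)
    then have "Liminf (at_right 0) (\<lambda>\<epsilon>. Lambda TYPE('a) \<epsilon>) \<le> ennreal \<delta>"
      by (intro Liminf_le) auto
    then show ?thesis by simp
  qed
  have "Liminf (at_right 0) (\<lambda>\<epsilon>. Lambda TYPE('a) \<epsilon>) \<le> 0"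
    by (rule ennreal_le_epsilon, rule H, assumption)
  then show ?thesis unfolding Lambda_nontrivial_def using le_zero_eq by blast
qed

end
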